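(* Let $t$ be a positive integer and let $G$ be a graph on $4t-1$ vertices with $\alpha(G)=2$ and $\mathrm{cm}(G)\le t-1$. Let $S_0,S_1,S_2$ be pairwise disjoint subsets of $V(G)$ (some possibly empty), each inducing a clique in $G$, such that $S_0$ is complete to $S_1\cup S_2$ and $S_1$ is anti-complete to $S_2$. Then $|S_0|+|S_1|+|S_2|\le t-1$.
   Context: All graphs are finite and simple. $\alpha(G)$ is the independence number. A matching $M$ in $G$ is connected if for every two edges of $M$ there is an edge of $G$ joining an endpoint of one to an endpoint of the other; $\mathrm{cm}(G)$ is the maximum size of a connected matching in $G$. For disjoint vertex sets $A,B$: $A$ is complete to $B$ if every vertex of $A$ is adjacent to every vertex of $B$; $A$ is anti-complete to $B$ if there is no edge between them. *)

theory Defs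
  imports Main
begin

definition simple_graph :: "'a set \<Rightarrow> ('a \<Rightarrow> 'a \<Rightarrow> bool) \<Rightarrow> bool" where
  "simple_graph V E \<longleftrightarrow> finite V \<and> (\<forall>u v. E u v \<longrightarrow> E v u)
     \<and> (\<forall>v. \<not> E v v) \<and> (\<forall>u v. E u v \<longrightarrow> u \<in> V \<and> v \<in> V)"

definition independent_set :: "'a set \<Rightarrow> ('a \<Rightarrow> 'a \<Rightarrow> bool) \<Rightarrow> 'a set \<Rightarrow> bool" where
  "independent_set V E I \<longleftrightarrow> I \<subseteq> V \<and> (\<forall>u\<in>I. \<forall>v\<in>I. \<not> E u v)"

definition independence_number :: "'a set \<Rightarrow> ('a \<Rightarrow> 'a \<Rightarrow> bool) \<Rightarrow> nat" where
  "independence_number V E = Max (card ` {I. independent_set V E I})"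

definition clique :: "'a set \<Rightarrow> ('a \<Rightarrow> 'a \<Rightarrow> bool) \<Rightarrow> 'a set \<Rightarrow> bool" where
  "clique V E S \<longleftrightarrow> S \<subseteq> V \<and> (\<forall>u\<in>S. \<forall>v\<in>S. u \<noteq> v \<longrightarrow> E u v)"

definition is_edge :: "('a \<Rightarrow> 'a \<Rightarrow> bool) \<Rightarrow> 'a set \<Rightarrow> bool" where
  "is_edge E e \<longleftrightarrow> (\<exists>u v. e = {u, v} \<and> E u v)"

definition matching :: "('a \<Rightarrow> 'a \<Rightarrow> bool) \<Rightarrow> 'a set set \<Rightarrow> bool" where
  "matching E M \<longleftrightarrow> (\<forall>e\<in>M. is_edge E e) \<and> (\<forall>e\<in>M. \<forall>f\<in>M. e \<noteq> f \<longrightarrow> e \<inter> f = {})"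

definition connected_matching :: "('a \<Rightarrow> 'a \<Rightarrow> bool) \<Rightarrow> 'a set set \<Rightarrow> bool" where
  "connected_matching E M \<longleftrightarrow> matching E M \<and>
     (\<forall>e\<in>M. \<forall>f\<in>M. e \<noteq> f \<longrightarrow> (\<exists>u\<in>e. \<exists>v\<in>f. E u v))"

definition cm :: "'a set \<Rightarrow> ('a \<Rightarrow> 'a \<Rightarrow> bool) \<Rightarrow> nat" where
  "cm V E = Max (card ` {M. connected_matching E M})"

definition complete_to :: "('a \<Rightarrow> 'a \<Rightarrow> bool) \<Rightarrow> 'a set \<Rightarrow> 'a set \<Rightarrow> bool" where
  "complete_to E A B \<longleftrightarrow> (\<forall>a\<in>A. \<forall>b\<in>B. E a b)"

definition anticomplete_to :: "('a \<Rightarrow> 'a \<Rightarrow> bool) \<Rightarrow> 'a set \<Rightarrow> 'a set \<Rightarrow> bool" where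
  "anticomplete_to E A B \<longleftrightarrow> (\<forall>a\<in>A. \<forall>b\<in>B. \<not> E a b)"

end

theory Submission
  imports Defs
begin

lemma finite_cms:
  assumes "simple_graph V E" shows "finite {M. connected_matching E M}"
proof -
  have "{M. connected_matching E M} \<subseteq> Pow (Pow V)"
  proof
    fix M assume "M \<in> {M. connected_matching E M}"
    then have "\<forall>e\<in>M. is_edge E e" by (simp add: connected_matching_def matching_def)
    then show "M \<in> Pow (Pow V)" using assms unfolding is_edge_def simple_graph_def by auto
  qed
  moreover have "finite V" using assms by (simp add: simple_graph_def)
  ultimately show ?thesis by (meson finite_Pow_iff finite_subset)
qed

lemma cm_ge:
  assumes "simple_graph V E" "connected_matching E M" shows "card M \<le> cm V E"
  unfolding cm_def by (rule Max_ge) (use assms finite_cms in auto)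

lemma cm_from_fun:
  assumes g: "simple_graph V E" and inj: "inj_on f D" and out: "\<forall>v\<in>D. f v \<notin> D"
    and ed: "\<forall>v\<in>D. E v (f v)"
    and con: "\<forall>v\<in>D. \<forall>w\<in>D. v \<noteq> w \<longrightarrow> (E v w \<or> E v (f w) \<or> E (f v) w \<or> E (f v) (f w))"
  shows "card D \<le> cm V E"
proof -
  let ?M = "(\<lambda>v. {v, f v}) ` D"
  have inj2: "inj_on (\<lambda>v. {v, f v}) D"
  proof (rule inj_onI)
    fix v w assume "v \<in> D" "w \<in> D" "{v, f v} = {w, f w}"
    then show "v = w" using out by (auto simp: doubleton_eq_iff)
  qed
  have "matching E ?M"
    unfolding matching_def is_edge_def
  proof (intro conjI ballI impI)
    fix e assume "e \<in> ?M" then show "\<exists>u v. e = {u, v} \<and> E u v" using ed by blast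
  next
    fix e e' assume "e \<in> ?M" "e' \<in> ?M" "e \<noteq> e'"
    then obtain v w where "v \<in> D" "w \<in> D" "e = {v, f v}" "e' = {w, f w}" "v \<noteq> w" by blast
    moreover have "f v \<noteq> f w" using inj \<open>v \<in> D\<close> \<open>w \<in> D\<close> \<open>v \<noteq> w\<close> by (meson inj_on_eq_iff)
    ultimately show "e \<inter> e' = {}" using out by auto
  qed
  moreover have "\<forall>e\<in>?M. \<forall>e'\<in>?M. e \<noteq> e' \<longrightarrow> (\<exists>u\<in>e. \<exists>v\<in>e'. E u v)"
  proof (intro ballI impI)
    fix e e' assume "e \<in> ?M" "e' \<in> ?M" "e \<noteq> e'"
    then obtain v w where "v \<in> D" "w \<in> D" "e = {v, f v}" "e' = {w, f w}" "v \<noteq> w" by blast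
    then show "\<exists>u\<in>e. \<exists>v\<in>e'. E u v" using con by blast
  qed
  ultimately have "connected_matching E ?M" unfolding connected_matching_def by blast
  then have "card ?M \<le> cm V E" by (rule cm_ge[OF g])
  then show ?thesis using card_image[OF inj2] by simp
qed

lemma sdr_greedy:
  assumes "finite X" "\<forall>v\<in>X. card X \<le> card (C v)"
  shows "\<exists>f. inj_on f X \<and> (\<forall>v\<in>X. f v \<in> C v)"
  using assms
proof (induction X rule: finite_induct)
  case empty then show ?case by auto
next
  case (insert a X)
  have "\<forall>v\<in>X. card X \<le> card (C v)" using insert by auto
  then obtain f where f: "inj_on f X" "\<forall>v\<in>X. f v \<in> C v" using insert.IH by blast
  have ca: "card X < card (C a)" using insert by simp
  have "\<not> C a \<subseteq> f ` X"
  proof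
    assume "C a \<subseteq> f ` X"
    then have "card (C a) \<le> card (f ` X)" by (simp add: card_mono insert.hyps)
    also have "\<dots> \<le> card X" by (rule card_image_le) (simp add: insert.hyps)
    finally show False using ca by simp
  qed
  then obtain b where b: "b \<in> C a" "b \<notin> f ` X" by blast
  have "inj_on (f(a := b)) (insert a X)"
    using f(1) b(2) insert.hyps(2) unfolding inj_on_def by auto
  moreover have "\<forall>v\<in>insert a X. (f(a := b)) v \<in> C v" using f(2) b(1) insert.hyps(2) by auto
  ultimately show ?case by blast
qed


lemma clique_cm:
  assumes g: "simple_graph V E" and cl: "clique V E P" and tP: "t \<le> card P" and P2: "card P \<le> 2*t"
    and nb: "\<forall>p\<in>P. 2*t - card P \<le> card {u \<in> V - P. E p u}"
  shows "t \<le> cm V E"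
proof -
  have finV: "finite V" using g by (simp add: simple_graph_def)
  have PV: "P \<subseteq> V" using cl by (simp add: clique_def)
  have finP: "finite P" using finV PV finite_subset by blast
  have "2*t - card P \<le> card P" using tP by simp
  then obtain K where K: "K \<subseteq> P" "card K = 2*t - card P" "finite K"
    by (rule obtain_subset_with_card_n)
  have "\<forall>v\<in>K. card K \<le> card {u \<in> V - P. E v u}" using K nb by auto
  then obtain f1 where f1: "inj_on f1 K" "\<forall>v\<in>K. f1 v \<in> {u \<in> V - P. E v u}"
    using sdr_greedy[OF K(3), where C="\<lambda>v. {u \<in> V - P. E v u}"] by blast
  define R where "R = P - K"
  have cR: "card R = 2 * card P - 2*t" unfolding R_def using K finP tP P2
    by (simp add: card_Diff_subset)
  have "card P - t \<le> card R" using cR by simp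
  then obtain B where B: "B \<subseteq> R" "card B = card P - t" "finite B"
    by (rule obtain_subset_with_card_n)
  define B' where "B' = R - B"
  have finR: "finite R" using finP R_def by simp
  have cB': "card B' = card P - t" unfolding B'_def using B cR finR
    by (simp add: card_Diff_subset)
  obtain h where h: "bij_betw h B B'"
    using finite_same_card_bij[of B B'] B cB' finR B'_def by auto
  define D where "D = K \<union> B"
  define f where "f = (\<lambda>v. if v \<in> K then f1 v else h v)"
  have KB: "K \<inter> B = {}" using B R_def by auto
  have cD: "card D = t" unfolding D_def using KB K B tP P2 by (simp add: card_Un_disjoint)
  have hB: "\<forall>v\<in>B. h v \<in> B'" using h by (auto simp: bij_betw_def)
  have hinj: "inj_on h B" using h by (auto simp: bij_betw_def)
  have DP: "D \<subseteq> P" using K B R_def D_def by auto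
  have "card D \<le> cm V E"
  proof (rule cm_from_fun[OF g])
    show "inj_on f D" unfolding inj_on_def
    proof (intro ballI impI)
      fix v w assume v: "v \<in> D" and w: "w \<in> D" and e: "f v = f w"
      show "v = w"
      proof (cases "v \<in> K"; cases "w \<in> K")
        assume "v \<in> K" "w \<in> K" then show ?thesis using e f1(1) f_def by (simp add: inj_on_eq_iff)
      next
        assume "v \<in> K" "w \<notin> K"
        then have "w \<in> B" using w D_def by auto
        then have "h w \<in> P" using hB B'_def R_def by auto
        moreover have "f1 v \<notin> P" using f1(2) \<open>v \<in> K\<close> by auto
        ultimately show ?thesis using e f_def \<open>v \<in> K\<close> \<open>w \<notin> K\<close> by auto
      next
        assume "v \<notin> K" "w \<in> K"
        then have "v \<in> B" using v D_def by auto
        then have "h v \<in> P" using hB B'_def R_def by auto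
        moreover have "f1 w \<notin> P" using f1(2) \<open>w \<in> K\<close> by auto
        ultimately show ?thesis using e f_def \<open>v \<notin> K\<close> \<open>w \<in> K\<close> by auto
      next
        assume "v \<notin> K" "w \<notin> K"
        then have "v \<in> B" "w \<in> B" using v w D_def by auto
        then show ?thesis using e f_def \<open>v \<notin> K\<close> \<open>w \<notin> K\<close> hinj by (simp add: inj_on_eq_iff)
      qed
    qed
    show "\<forall>v\<in>D. f v \<notin> D"
    proof
      fix v assume v: "v \<in> D"
      show "f v \<notin> D"
      proof (cases "v \<in> K")
        case True then show ?thesis using f1(2) DP f_def by auto
      next
        case False then have "v \<in> B" using v D_def by auto
        then have "h v \<in> B'" using hB by auto
        then show ?thesis using False f_def D_def B'_def R_def by auto
      qed
    qed
    show "\<forall>v\<in>D. E v (f v)"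
    proof
      fix v assume v: "v \<in> D"
      show "E v (f v)"
      proof (cases "v \<in> K")
        case True then show ?thesis using f1(2) f_def by auto
      next
        case False then have "v \<in> B" using v D_def by auto
        then have "h v \<in> B'" using hB by auto
        then have "h v \<in> P" "h v \<noteq> v" using B'_def R_def \<open>v \<in> B\<close> by auto
        then show ?thesis using False f_def cl \<open>v \<in> B\<close> DP D_def unfolding clique_def by auto
      qed
    qed
    show "\<forall>v\<in>D. \<forall>w\<in>D. v \<noteq> w \<longrightarrow> (E v w \<or> E v (f w) \<or> E (f v) w \<or> E (f v) (f w))"
      using DP cl unfolding clique_def by blast
  qed
  then show ?thesis using cD by simp
qed

lemma main_rule:
  assumes g: "simple_graph V E" and cV: "card V = 4*t - 1" and DV: "D \<subseteq> V" and cD: "card D = t"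
    and Dun: "D = D0 \<union> Da \<union> Db"
    and c1: "clique V E (D0 \<union> Da)" and c2: "clique V E (D0 \<union> Db)"
    and nbs: "\<forall>v\<in>V. card {u \<in> V. u \<noteq> v \<and> \<not> E v u} \<le> t - 1"
    and rl: "\<forall>y\<in>Db. card Db \<le> card {v \<in> V - D. E y v \<and> (\<forall>x\<in>Da. E x v)}"
    and t1: "1 \<le> t"
  shows "t \<le> cm V E"
proof -
  have finV: "finite V" using g by (simp add: simple_graph_def)
  have finD: "finite D" using finV DV finite_subset by blast
  have finDb: "finite Db" using finD Dun by simp
  obtain f2 where f2: "inj_on f2 Db" "\<forall>y\<in>Db. f2 y \<in> {v \<in> V - D. E y v \<and> (\<forall>x\<in>Da. E x v)}"
    using sdr_greedy[OF finDb rl] by blast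
  define Dr where "Dr = D - Db"
  have finDr: "finite Dr" using finD Dr_def by simp
  have cDr: "card Dr = t - card Db" unfolding Dr_def using cD Dun finD by (simp add: card_Diff_subset)
  have cVD: "card (V - D) = 3*t - 1" using cV cD DV finD by (simp add: card_Diff_subset)
  have big: "2*t - card Db \<le> card ({u \<in> V - D. E v u} - f2 ` Db)" if v: "v \<in> D" for v
  proof -
    have vV: "v \<in> V" using v DV by auto
    have "(V - D) - {u \<in> V. u \<noteq> v \<and> \<not> E v u} \<subseteq> {u \<in> V - D. E v u}" using v by auto
    moreover have "card (V - D) - card {u \<in> V. u \<noteq> v \<and> \<not> E v u}
        \<le> card ((V - D) - {u \<in> V. u \<noteq> v \<and> \<not> E v u})"
      by (rule diff_card_le_card_Diff) (use finV in auto)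
    moreover have "finite {u \<in> V - D. E v u}" using finV by simp
    ultimately have a: "card (V - D) - card {u \<in> V. u \<noteq> v \<and> \<not> E v u} \<le> card {u \<in> V - D. E v u}"
      by (meson card_mono le_trans)
    have b: "card {u \<in> V. u \<noteq> v \<and> \<not> E v u} \<le> t - 1" using nbs vV by auto
    have c: "2*t \<le> card {u \<in> V - D. E v u}" using a b cVD t1 by linarith
    have d: "card {u \<in> V - D. E v u} - card (f2 ` Db) \<le> card ({u \<in> V - D. E v u} - f2 ` Db)"
      by (rule diff_card_le_card_Diff) (use finDb in auto)
    have e: "card (f2 ` Db) \<le> card Db" by (rule card_image_le[OF finDb])
    show ?thesis using c d e by linarith
  qed
  have "\<forall>v\<in>Dr. card Dr \<le> card ({u \<in> V - D. E v u} - f2 ` Db)"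
    using big cDr Dr_def by fastforce
  then obtain fr where fr: "inj_on fr Dr" "\<forall>v\<in>Dr. fr v \<in> {u \<in> V - D. E v u} - f2 ` Db"
    using sdr_greedy[OF finDr, where C="\<lambda>v. {u \<in> V - D. E v u} - f2 ` Db"] by blast
  define f where "f = (\<lambda>v. if v \<in> Db then f2 v else fr v)"
  have sym: "\<And>u v. E u v \<Longrightarrow> E v u" using g by (simp add: simple_graph_def)
  have "card D \<le> cm V E"
  proof (rule cm_from_fun[OF g])
    show "inj_on f D" unfolding inj_on_def
    proof (intro ballI impI)
      fix v w assume v: "v \<in> D" and w: "w \<in> D" and e: "f v = f w"
      show "v = w"
      proof (cases "v \<in> Db"; cases "w \<in> Db")
        assume "v \<in> Db" "w \<in> Db" then show ?thesis using e f2(1) f_def by (simp add: inj_on_eq_iff)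
      next
        assume "v \<in> Db" "w \<notin> Db"
        then have "w \<in> Dr" using w Dr_def by auto
        then have "fr w \<notin> f2 ` Db" using fr(2) by blast
        moreover have "f2 v \<in> f2 ` Db" using \<open>v \<in> Db\<close> by blast
        moreover have "f2 v = fr w" using e f_def \<open>v \<in> Db\<close> \<open>w \<notin> Db\<close> by simp
        ultimately show ?thesis by metis
      next
        assume "v \<notin> Db" "w \<in> Db"
        then have "v \<in> Dr" using v Dr_def by auto
        then have "fr v \<notin> f2 ` Db" using fr(2) by blast
        moreover have "f2 w \<in> f2 ` Db" using \<open>w \<in> Db\<close> by blast
        moreover have "fr v = f2 w" using e f_def \<open>v \<notin> Db\<close> \<open>w \<in> Db\<close> by simp
        ultimately show ?thesis by metis
      next
        assume "v \<notin> Db" "w \<notin> Db"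
        then have "v \<in> Dr" "w \<in> Dr" using v w Dr_def by auto
        then show ?thesis using e f_def \<open>v \<notin> Db\<close> \<open>w \<notin> Db\<close> fr(1) by (simp add: inj_on_eq_iff)
      qed
    qed
    show "\<forall>v\<in>D. f v \<notin> D" using f2(2) fr(2) f_def Dr_def by auto
    show "\<forall>v\<in>D. E v (f v)" using f2(2) fr(2) f_def Dr_def by auto
    show "\<forall>v\<in>D. \<forall>w\<in>D. v \<noteq> w \<longrightarrow> (E v w \<or> E v (f w) \<or> E (f v) w \<or> E (f v) (f w))"
    proof (intro ballI impI)
      fix v w assume v: "v \<in> D" and w: "w \<in> D" and vw: "v \<noteq> w"
      show "E v w \<or> E v (f w) \<or> E (f v) w \<or> E (f v) (f w)"
      proof (cases "v \<in> D0 \<union> Da \<and> w \<in> D0 \<union> Da")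
        case True then show ?thesis using c1 vw unfolding clique_def by blast
      next
        case F1: False
        show ?thesis
        proof (cases "v \<in> D0 \<union> Db \<and> w \<in> D0 \<union> Db")
          case True then show ?thesis using c2 vw unfolding clique_def by blast
        next
          case False
          then have "(v \<in> Da \<and> w \<in> Db) \<or> (v \<in> Db \<and> w \<in> Da)" using F1 v w Dun by blast
          then show ?thesis
          proof
            assume "v \<in> Da \<and> w \<in> Db"
            then have "E v (f w)" using f2(2) f_def by auto
            then show ?thesis by blast
          next
            assume "v \<in> Db \<and> w \<in> Da"
            then have "E w (f v)" using f2(2) f_def by auto
            then show ?thesis using sym by blast
          qed
        qed
      qed
    qed
  qed
  then show ?thesis using cD by simp
qed


lemma clique_subset: "clique V E A \<Longrightarrow> B \<subseteq> A \<Longrightarrow> clique V E B"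
  unfolding clique_def by blast

theorem theorem1p5:
  fixes V :: "'a set" and E :: "'a \<Rightarrow> 'a \<Rightarrow> bool" and t :: nat
    and S0 S1 S2 :: "'a set"
  assumes "simple_graph V E"
    and "t \<ge> 1"
    and "card V = 4 * t - 1"
    and "independence_number V E = 2"
    and "cm V E \<le> t - 1"
    and "S0 \<subseteq> V" and "S1 \<subseteq> V" and "S2 \<subseteq> V"
    and "S0 \<inter> S1 = {}" and "S0 \<inter> S2 = {}" and "S1 \<inter> S2 = {}"
    and "clique V E S0" and "clique V E S1" and "clique V E S2"
    and "complete_to E S0 (S1 \<union> S2)"
    and "anticomplete_to E S1 S2"
  shows "card S0 + card S1 + card S2 \<le> t - 1"
proof (rule ccontr)
  assume neg: "\<not> (card S0 + card S1 + card S2 \<le> t - 1)"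
  note g = assms(1)
  have finV: "finite V" using g by (simp add: simple_graph_def)
  have sym: "\<And>u v. E u v \<Longrightarrow> E v u" using g by (simp add: simple_graph_def)
  have irr: "\<And>v. \<not> E v v" using g by (simp add: simple_graph_def)
  have indep3: False if "a \<in> V" "b \<in> V" "c \<in> V" "a \<noteq> b" "a \<noteq> c" "b \<noteq> c"
      "\<not> E a b" "\<not> E a c" "\<not> E b c" for a b c
  proof -
    have "\<not> E b a" "\<not> E c a" "\<not> E c b" using that sym by blast+
    then have "independent_set V E {a, b, c}" unfolding independent_set_def
      using that irr by auto
    moreover have "finite {I. independent_set V E I}"
    proof (rule finite_subset[of _ "Pow V"])
      show "{I. independent_set V E I} \<subseteq> Pow V" unfolding independent_set_def by blast
    qed (use finV in simp)
    ultimately have "card {a, b, c} \<le> independence_number V E"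
      unfolding independence_number_def by (intro Max_ge) auto
    moreover have "card {a, b, c} = 3" using that by simp
    ultimately show False using assms(4) by simp
  qed
  define nb where "nb v = {u \<in> V. u \<noteq> v \<and> \<not> E v u}" for v
  have nbcl: "clique V E (nb v)" if "v \<in> V" for v
    unfolding clique_def
  proof (intro conjI ballI impI)
    show "nb v \<subseteq> V" unfolding nb_def by blast
  next
    fix u w assume u: "u \<in> nb v" and w: "w \<in> nb v" and uw: "u \<noteq> w"
    show "E u w"
    proof (rule ccontr)
      assume "\<not> E u w"
      then show False using indep3[of v u w] u w uw that unfolding nb_def by blast
    qed
  qed
  have cmlt: "cm V E < t" using assms(2) assms(5) by linarith
  have noc2: "card P < 2*t" if cP: "clique V E P" for P
  proof (rule ccontr)
    assume "\<not> card P < 2*t"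
    then obtain P' where P': "P' \<subseteq> P" "card P' = 2*t" "finite P'"
      by (meson not_less obtain_subset_with_card_n)
    have "clique V E P'" using clique_subset[OF cP P'(1)] .
    then have "t \<le> cm V E" using clique_cm[OF g, of P' t] P' by simp
    then show False using cmlt by simp
  qed
  have nbsize: "card (V - P) - card (nb p) \<le> card {u \<in> V - P. E p u}" if "p \<in> P" for P p
  proof -
    have "(V - P) - nb p \<subseteq> {u \<in> V - P. E p u}" using that unfolding nb_def by auto
    moreover have "card (V - P) - card (nb p) \<le> card ((V - P) - nb p)"
      by (rule diff_card_le_card_Diff) (use finV in \<open>simp add: nb_def\<close>)
    moreover have "finite {u \<in> V - P. E p u}" using finV by simp
    ultimately show ?thesis by (meson card_mono le_trans)
  qed
  have noc1: "card P < t" if cP: "clique V E P" for P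
  proof (rule ccontr)
    assume "\<not> card P < t"
    then have tP: "t \<le> card P" by simp
    have P2: "card P < 2*t" using noc2[OF cP] .
    have PV: "P \<subseteq> V" using cP by (simp add: clique_def)
    have cVP: "card (V - P) = 4*t - 1 - card P" using assms(3) PV finV
      by (simp add: card_Diff_subset finite_subset)
    have "\<forall>p\<in>P. 2*t - card P \<le> card {u \<in> V - P. E p u}"
    proof
      fix p assume p: "p \<in> P"
      have "card (nb p) < 2*t" using noc2[OF nbcl] p PV by auto
      then show "2*t - card P \<le> card {u \<in> V - P. E p u}" using nbsize[OF p] cVP P2 by linarith
    qed
    then have "t \<le> cm V E" using clique_cm[OF g cP tP] P2 by simp
    then show False using cmlt by simp
  qed
  have nbs: "\<forall>v\<in>V. card {u \<in> V. u \<noteq> v \<and> \<not> E v u} \<le> t - 1"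
  proof
    fix v assume "v \<in> V"
    then have "card (nb v) < t" using noc1[OF nbcl] by blast
    then show "card {u \<in> V. u \<noteq> v \<and> \<not> E v u} \<le> t - 1" unfolding nb_def by linarith
  qed
  have cl0: "clique V E (S0 \<union> Si)" if "Si \<subseteq> S1 \<union> S2" "clique V E Si" for Si
    unfolding clique_def
  proof (intro conjI ballI impI)
    show "S0 \<union> Si \<subseteq> V" using assms(12) that(2) unfolding clique_def by blast
  next
    fix u v assume u: "u \<in> S0 \<union> Si" and v: "v \<in> S0 \<union> Si" and uv: "u \<noteq> v"
    have c0: "\<And>a b. a \<in> S0 \<Longrightarrow> b \<in> Si \<Longrightarrow> E a b"
      using assms(15) that(1) unfolding complete_to_def by blast
    show "E u v"
    proof (cases "u \<in> S0")
      case True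
      show ?thesis
      proof (cases "v \<in> S0")
        case True then show ?thesis using \<open>u \<in> S0\<close> uv assms(12) unfolding clique_def by blast
      next
        case False then show ?thesis using \<open>u \<in> S0\<close> v c0 by blast
      qed
    next
      case False
      then have "u \<in> Si" using u by blast
      show ?thesis
      proof (cases "v \<in> S0")
        case True then show ?thesis using \<open>u \<in> Si\<close> c0 sym by blast
      next
        case False then show ?thesis using \<open>u \<in> Si\<close> v uv that(2) unfolding clique_def by blast
      qed
    qed
  qed
  have cl01: "clique V E (S0 \<union> S1)" using cl0[of S1] assms(13) by blast
  have cl02: "clique V E (S0 \<union> S2)" using cl0[of S2] assms(14) by blast
  have finS: "finite S0" "finite S1" "finite S2"
    using finite_subset[OF assms(6) finV] finite_subset[OF assms(7) finV] finite_subset[OF assms(8) finV]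
    by auto
  have "card (S0 \<union> S1 \<union> S2) = card S0 + card S1 + card S2"
    using finS assms(9,10,11) by (simp add: card_Un_disjoint Int_Un_distrib2)
  then have "t \<le> card (S0 \<union> S1 \<union> S2)" using neg by linarith
  then obtain D where D: "D \<subseteq> S0 \<union> S1 \<union> S2" "card D = t" "finite D"
    by (rule obtain_subset_with_card_n)
  define D0 where "D0 = D \<inter> S0"
  define D1 where "D1 = D \<inter> S1"
  define D2 where "D2 = D \<inter> S2"
  have Dun: "D = D0 \<union> D1 \<union> D2" using D(1) D0_def D1_def D2_def by blast
  have DV: "D \<subseteq> V" using D(1) assms(6,7,8) by blast
  have c01: "clique V E (D0 \<union> D1)" by (rule clique_subset[OF cl01]) (auto simp: D0_def D1_def)
  have c02: "clique V E (D0 \<union> D2)" by (rule clique_subset[OF cl02]) (auto simp: D0_def D2_def)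
  define T where "T = V - D"
  have cT: "card T = 3*t - 1" unfolding T_def using assms(3) D DV by (simp add: card_Diff_subset)
  define A1 where "A1 = {v \<in> T. \<exists>x\<in>D1. \<not> E x v}"
  define A2 where "A2 = {v \<in> T. \<exists>y\<in>D2. \<not> E y v}"
  have disj: "A1 \<inter> A2 = {}"
  proof (rule ccontr)
    assume "A1 \<inter> A2 \<noteq> {}"
    then obtain v x y where v: "v \<in> T" and x: "x \<in> D1" "\<not> E x v" and y: "y \<in> D2" "\<not> E y v"
      unfolding A1_def A2_def by blast
    have "\<not> E x y" using assms(16) x y unfolding anticomplete_to_def D1_def D2_def by blast
    moreover have "x \<noteq> y" using x y assms(11) D1_def D2_def by blast
    moreover have "v \<noteq> x" "v \<noteq> y" using v x y T_def D1_def D2_def by auto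
    moreover have "x \<in> V" "y \<in> V" "v \<in> V" using x y v DV T_def D1_def D2_def by auto
    ultimately show False using indep3[of x y v] x y by blast
  qed
  have finT: "finite T" using finV T_def by simp
  have cA: "card A1 + card A2 \<le> 3*t - 1"
  proof -
    have "card A1 + card A2 = card (A1 \<union> A2)"
      using disj finT by (simp add: card_Un_disjoint A1_def A2_def)
    also have "\<dots> \<le> card T" using finT by (intro card_mono) (auto simp: A1_def A2_def)
    finally show ?thesis using cT by simp
  qed
  have cD12: "card D1 + card D2 \<le> t"
  proof -
    have "card D1 + card D2 = card (D1 \<union> D2)"
      using D(3) assms(11) by (simp add: card_Un_disjoint D1_def D2_def Int_commute Int_left_commute Int_assoc)
    also have "\<dots> \<le> card D" using D(3) by (intro card_mono) (auto simp: D1_def D2_def)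
    finally show ?thesis using D(2) by simp
  qed
  have choice: "(\<forall>y\<in>D2. card D2 \<le> card {v \<in> V - D. E y v \<and> (\<forall>x\<in>D1. E x v)})
     \<or> (\<forall>x\<in>D1. card D1 \<le> card {v \<in> V - D. E x v \<and> (\<forall>y\<in>D2. E y v)})"
  proof (rule ccontr)
    assume "\<not> ?thesis"
    then obtain y x where y: "y \<in> D2" "card {v \<in> V - D. E y v \<and> (\<forall>x\<in>D1. E x v)} < card D2"
      and x: "x \<in> D1" "card {v \<in> V - D. E x v \<and> (\<forall>y\<in>D2. E y v)} < card D1"
      by (auto simp: not_le)
    have yV: "y \<in> V" "y \<in> D" using y DV D2_def by auto
    have xV: "x \<in> V" "x \<in> D" using x DV D1_def by auto
    have s1: "T \<subseteq> {v \<in> V - D. E y v \<and> (\<forall>x\<in>D1. E x v)} \<union> A1 \<union> nb y"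
      using yV unfolding T_def A1_def nb_def by auto
    have s2: "T \<subseteq> {v \<in> V - D. E x v \<and> (\<forall>y\<in>D2. E y v)} \<union> A2 \<union> nb x"
      using xV unfolding T_def A2_def nb_def by auto
    have fin3: "finite ({v \<in> V - D. E y v \<and> (\<forall>x\<in>D1. E x v)} \<union> A1 \<union> nb y)"
      "finite ({v \<in> V - D. E x v \<and> (\<forall>y\<in>D2. E y v)} \<union> A2 \<union> nb x)"
      using finV finT unfolding A1_def A2_def nb_def by auto
    have "card T \<le> card {v \<in> V - D. E y v \<and> (\<forall>x\<in>D1. E x v)} + card A1 + card (nb y)"
      using card_mono[OF fin3(1) s1] card_Un_le[of "{v \<in> V - D. E y v \<and> (\<forall>x\<in>D1. E x v)} \<union> A1" "nb y"]
        card_Un_le[of "{v \<in> V - D. E y v \<and> (\<forall>x\<in>D1. E x v)}" A1] by linarith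
    moreover have "card T \<le> card {v \<in> V - D. E x v \<and> (\<forall>y\<in>D2. E y v)} + card A2 + card (nb x)"
      using card_mono[OF fin3(2) s2] card_Un_le[of "{v \<in> V - D. E x v \<and> (\<forall>y\<in>D2. E y v)} \<union> A2" "nb x"]
        card_Un_le[of "{v \<in> V - D. E x v \<and> (\<forall>y\<in>D2. E y v)}" A2] by linarith
    moreover have "card (nb y) \<le> t - 1" "card (nb x) \<le> t - 1" using nbs xV yV unfolding nb_def by auto
    ultimately show False using x(2) y(2) cA cD12 cT assms(2) by linarith
  qed
  have "t \<le> cm V E"
  proof (cases "\<forall>y\<in>D2. card D2 \<le> card {v \<in> V - D. E y v \<and> (\<forall>x\<in>D1. E x v)}")
    case True
    show ?thesis by (rule main_rule[OF g assms(3) DV D(2) Dun c01 c02 nbs True assms(2)])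
  next
    case False
    then have rl: "\<forall>x\<in>D1. card D1 \<le> card {v \<in> V - D. E x v \<and> (\<forall>y\<in>D2. E y v)}" using choice by blast
    have Dun': "D = D0 \<union> D2 \<union> D1" using Dun by blast
    show ?thesis by (rule main_rule[OF g assms(3) DV D(2) Dun' c02 c01 nbs rl assms(2)])
  qed
  then show False using cmlt by simp
qed

end
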